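(* Consider a dynamic finite set $S$ with a function $f:S\to\mathbb{Z}_{\ge0}$ that is modified only by the following restricted operations: insert a new element $x$ with $f(x)=0$; delete an element $x$ with $f(x)=0$; increment $f(x)$ by $1$ for some $x\in S$; decrement $f(x)$ by $1$ for some $x\in S$ with $f(x)\ge1$. If, over some contiguous sequence of such operations, the $h$-index of $S$ and $f$ changes from $h$ (before the sequence) to $h'>h$ (after the sequence), then the sequence contains at least $(h'-h)^2$ increment operations.
   Context: For a finite set $S$ and $f:S\to\mathbb{Z}_{\ge0}$, the $h$-index of $S$ and $f$ is the largest integer $h\ge 0$ such that there is a subset $H\subseteq S$ with $|H|=h$ and $f(x)\ge h$ for all $x\in H$. *)

theory Defs
  imports Main
begin

definition hindex :: "'a set \<Rightarrow> ('a \<Rightarrow> nat) \<Rightarrow> nat" where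
  "hindex S f = (GREATEST h. \<exists>H \<subseteq> S. card H = h \<and> (\<forall>x\<in>H. h \<le> f x))"

datatype 'a op = Ins 'a | Del 'a | Inc 'a | Dec 'a

inductive step :: "'a set \<times> ('a \<Rightarrow> nat) \<Rightarrow> 'a op \<Rightarrow> 'a set \<times> ('a \<Rightarrow> nat) \<Rightarrow> bool" where
  ins: "x \<notin> S \<Longrightarrow> step (S, f) (Ins x) (insert x S, f(x := 0))"
| del: "x \<in> S \<Longrightarrow> f x = 0 \<Longrightarrow> step (S, f) (Del x) (S - {x}, f)"
| inc: "x \<in> S \<Longrightarrow> step (S, f) (Inc x) (S, f(x := f x + 1))"
| dec: "x \<in> S \<Longrightarrow> 1 \<le> f x \<Longrightarrow> step (S, f) (Dec x) (S, f(x := f x - 1))"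

inductive steps :: "'a set \<times> ('a \<Rightarrow> nat) \<Rightarrow> 'a op list \<Rightarrow> 'a set \<times> ('a \<Rightarrow> nat) \<Rightarrow> bool" where
  nil: "steps st [] st"
| cons: "step st o1 st1 \<Longrightarrow> steps st1 ops st2 \<Longrightarrow> steps st (o1 # ops) st2"

fun is_inc :: "'a op \<Rightarrow> bool" where
  "is_inc (Inc _) = True"
| "is_inc _ = False"

end

theory Submission
  imports Defs
begin

definition pot :: "nat \<Rightarrow> nat \<Rightarrow> 'a set \<Rightarrow> ('a \<Rightarrow> nat) \<Rightarrow> nat" where
  "pot h k S f = (\<Sum>x\<in>S. min (f x) k - h)"

lemma step_pot:
  assumes "step (S, f) o1 (S1, f1)" "finite S"
  shows "finite S1 \<and> pot h k S1 f1 \<le> pot h k S f + (if is_inc o1 then 1 else 0)"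
  using assms
proof (cases rule: step.cases)
  case (ins x)
  have "(\<Sum>y\<in>S. min ((f(x:=0)) y) k - h) = (\<Sum>y\<in>S. min (f y) k - h)"
    using ins by (intro sum.cong) auto
  then show ?thesis using ins assms(2) by (simp add: pot_def)
next
  case (del x)
  have "(\<Sum>y\<in>S. min (f y) k - h) = (min (f x) k - h) + (\<Sum>y\<in>S-{x}. min (f y) k - h)"
    using del assms(2) by (simp add: sum.remove)
  then show ?thesis using del assms(2) by (simp add: pot_def)
next
  case (inc x)
  let ?g = "\<lambda>y. min (f y) k - h"
  let ?g1 = "\<lambda>y. min ((f(x := f x + 1)) y) k - h"
  have a: "sum ?g1 S = ?g1 x + sum ?g1 (S-{x})"
    using inc assms(2) by (simp add: sum.remove)
  have b: "sum ?g S = ?g x + sum ?g (S-{x})"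
    using inc assms(2) by (simp add: sum.remove)
  have c: "sum ?g1 (S-{x}) = sum ?g (S-{x})" by (intro sum.cong) auto
  have d: "?g1 x \<le> ?g x + 1" by auto
  show ?thesis using inc assms(2) a b c d by (simp add: pot_def)
next
  case (dec x)
  have "(\<Sum>y\<in>S. min ((f(x := f x - 1)) y) k - h) \<le> (\<Sum>y\<in>S. min (f y) k - h)"
    by (intro sum_mono) auto
  then show ?thesis using dec assms(2) by (simp add: pot_def)
qed

lemma steps_pot:
  assumes "steps st ops st2" "finite (fst st)"
  shows "finite (fst st2) \<and> pot h k (fst st2) (snd st2) \<le> pot h k (fst st) (snd st) + length (filter is_inc ops)"
  using assms
proof (induction rule: steps.induct)
  case (nil st)
  then show ?case by simp
next
  case (cons st o1 st1 ops st2)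
  obtain S f where st: "st = (S, f)" by (cases st)
  obtain S1 f1 where st1: "st1 = (S1, f1)" by (cases st1)
  have "finite S1 \<and> pot h k S1 f1 \<le> pot h k S f + (if is_inc o1 then 1 else 0)"
    using step_pot[of S f o1 S1 f1] cons st st1 by simp
  then show ?case using cons st st1 by auto
qed

lemma hindex_bound:
  assumes "finite S"
  shows "\<forall>y. (\<exists>H \<subseteq> S. card H = y \<and> (\<forall>x\<in>H. y \<le> f x)) \<longrightarrow> y \<le> card S"
  using assms card_mono by blast

lemma hindex_ex:
  assumes "finite S"
  shows "\<exists>H \<subseteq> S. card H = hindex S f \<and> (\<forall>x\<in>H. hindex S f \<le> f x)"
  unfolding hindex_def
  apply (rule GreatestI_nat[where k=0 and b="card S"])
  using hindex_bound[OF assms] by auto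

lemma hindex_ge:
  assumes "finite S" "H \<subseteq> S" "\<forall>x\<in>H. card H \<le> f x"
  shows "card H \<le> hindex S f"
  unfolding hindex_def
  apply (rule Greatest_le_nat[where b="card S"])
  using hindex_bound[OF assms(1)] assms by auto

lemma start_card:
  assumes "finite S"
  shows "card {x\<in>S. f x > hindex S f} \<le> hindex S f"
proof (rule ccontr)
  let ?A = "{x\<in>S. f x > hindex S f}"
  assume "\<not> ?thesis"
  then have "Suc (hindex S f) \<le> card ?A" by simp
  then obtain B where B: "B \<subseteq> ?A" "card B = Suc (hindex S f)"
    by (meson obtain_subset_with_card_n)
  have "card B \<le> hindex S f"
    by (rule hindex_ge[OF assms]) (use B in auto)
  with B show False by simp
qed

theorem lemma1:
  fixes S S' :: "'a set" and f f' :: "'a \<Rightarrow> nat" and ops :: "'a op list"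
  assumes "finite S"
    and "steps (S, f) ops (S', f')"
    and "hindex S f < hindex S' f'"
  shows "(hindex S' f' - hindex S f) ^ 2 \<le> length (filter is_inc ops)"
proof -
  define h where "h = hindex S f"
  define k where "k = hindex S' f'"
  define n where "n = length (filter is_inc ops)"
  have P: "finite S' \<and> pot h k S' f' \<le> pot h k S f + n"
    using steps_pot[OF assms(2)] assms(1) n_def by simp
  let ?A = "{x\<in>S. f x > h}"
  have "pot h k S f = (\<Sum>x\<in>?A. min (f x) k - h)"
    unfolding pot_def using assms(1) by (intro sum.mono_neutral_right) auto
  also have "\<dots> \<le> (\<Sum>x\<in>?A. k - h)" by (intro sum_mono) auto
  also have "\<dots> = card ?A * (k - h)" by simp
  also have "\<dots> \<le> h * (k - h)"
    using start_card[OF assms(1), of f] h_def by simp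
  finally have st: "pot h k S f \<le> h * (k - h)" .
  obtain H where H: "H \<subseteq> S'" "card H = k" "\<forall>x\<in>H. k \<le> f' x"
    using hindex_ex[of S' f'] P k_def by auto
  have "k * (k - h) = (\<Sum>x\<in>H. min (f' x) k - h)"
    using H by simp
  also have "\<dots> \<le> pot h k S' f'"
    unfolding pot_def using P H by (intro sum_mono2) auto
  finally have en: "k * (k - h) \<le> pot h k S' f'" .
  have "k * (k - h) \<le> h * (k - h) + n" using st en P by linarith
  moreover obtain d where "k = h + d" using assms(3) h_def k_def
    by (metis less_imp_add_positive)
  ultimately have "d * d \<le> n" by (simp add: algebra_simps)
  then show ?thesis using \<open>k = h + d\<close> h_def k_def n_def by (simp add: power2_eq_square)
qed

end
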